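(* Let $T$ be an integral domain, let $K$ be a subfield of $T$ and $M$ a nonzero maximal ideal of $T$ such that $T=K+M$. Let $k$ be a subfield of $K$ and set $R=k+M$. Then: (1) If $M$ contains an irreducible element of $T$, then $R$ is a U-FFD if and only if $T$ is a U-FFD and the quotient group $K^\times/k^\times$ is finite. (2) If $M$ contains no irreducible element of $T$, then $R$ is a U-FFD if and only if $T$ is a U-FFD.
   Context: An integral domain is a U-FFD (has the U-FF property) if every nonzero element that is a unit or a finite product of irreducible elements has only finitely many factorizations into irreducibles, counted up to order and associates. $K^\times,k^\times$ denote the multiplicative groups of the fields. *)

theory Defs
  imports Main "HOL-Library.Multiset"
begin

text \<open>All rings live inside the integral domain T, rendered as the full type 'a::idom.
Subrings (such as R = k + M) are given as carrier sets S, and the divisibility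
notions (units, irreducibles, associates, factorizations) are taken relative to S.\<close>

definition is_subring :: "'a::idom set \<Rightarrow> bool" where
  "is_subring S \<longleftrightarrow> 0 \<in> S \<and> 1 \<in> S \<and>
     (\<forall>x\<in>S. \<forall>y\<in>S. x + y \<in> S \<and> x - y \<in> S \<and> x * y \<in> S)"

definition is_subfield :: "'a::idom set \<Rightarrow> bool" where
  "is_subfield F \<longleftrightarrow> is_subring F \<and> (\<forall>x\<in>F. x \<noteq> 0 \<longrightarrow> (\<exists>y\<in>F. x * y = 1))"

definition is_ideal :: "'a::idom set \<Rightarrow> bool" where
  "is_ideal I \<longleftrightarrow> 0 \<in> I \<and> (\<forall>x\<in>I. \<forall>y\<in>I. x + y \<in> I) \<and> (\<forall>r. \<forall>x\<in>I. r * x \<in> I)"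

definition is_maximal_ideal :: "'a::idom set \<Rightarrow> bool" where
  "is_maximal_ideal M \<longleftrightarrow> is_ideal M \<and> M \<noteq> UNIV \<and>
     (\<forall>I. is_ideal I \<and> M \<subseteq> I \<longrightarrow> I = M \<or> I = UNIV)"

definition unit_in :: "'a::idom set \<Rightarrow> 'a \<Rightarrow> bool" where
  "unit_in S u \<longleftrightarrow> u \<in> S \<and> (\<exists>v\<in>S. u * v = 1)"

definition irred_in :: "'a::idom set \<Rightarrow> 'a \<Rightarrow> bool" where
  "irred_in S p \<longleftrightarrow> p \<in> S \<and> p \<noteq> 0 \<and> \<not> unit_in S p \<and>
     (\<forall>a\<in>S. \<forall>b\<in>S. p = a * b \<longrightarrow> unit_in S a \<or> unit_in S b)"

definition assoc_in :: "'a::idom set \<Rightarrow> 'a \<Rightarrow> 'a \<Rightarrow> bool" where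
  "assoc_in S a b \<longleftrightarrow> a \<in> S \<and> b \<in> S \<and> (\<exists>u. unit_in S u \<and> a = u * b)"

text \<open>A factorization of x in S: a finite multiset of irreducibles of S whose product
is x up to a unit of S (for a unit x this is the empty factorization).\<close>
definition factorizations_in :: "'a::idom set \<Rightarrow> 'a \<Rightarrow> 'a multiset set" where
  "factorizations_in S x = {m. (\<forall>p\<in>#m. irred_in S p) \<and> assoc_in S x (prod_mset m)}"

definition fact_equiv :: "'a::idom set \<Rightarrow> ('a multiset \<times> 'a multiset) set" where
  "fact_equiv S = {(m, m'). rel_mset (assoc_in S) m m'}"

definition is_atomic_elem :: "'a::idom set \<Rightarrow> 'a \<Rightarrow> bool" where
  "is_atomic_elem S x \<longleftrightarrow> unit_in S x \<or>
     (\<exists>m. m \<noteq> {#} \<and> (\<forall>p\<in>#m. irred_in S p) \<and> x = prod_mset m)"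

definition U_FFD :: "'a::idom set \<Rightarrow> bool" where
  "U_FFD S \<longleftrightarrow> (\<forall>x\<in>S. x \<noteq> 0 \<and> is_atomic_elem S x \<longrightarrow>
      finite (factorizations_in S x // fact_equiv S))"

text \<open>Finiteness of the quotient group K^x / k^x (cosets of k^x in K^x).\<close>
definition finite_unit_quotient :: "'a::idom set \<Rightarrow> 'a set \<Rightarrow> bool" where
  "finite_unit_quotient K k \<longleftrightarrow> finite {(\<lambda>y. x * y) ` (k - {0}) | x. x \<in> K - {0}}"

end

theory Submission
  imports Defs
begin

lemma rel_mset_elem: "rel_mset P m n \<Longrightarrow> x \<in># m \<Longrightarrow> \<exists>y\<in>#n. P x y"
  by (induction rule: rel_mset_induct) auto

lemma rel_mset_image: "(\<And>x. x \<in># m \<Longrightarrow> P x (f x)) \<Longrightarrow> rel_mset P m (image_mset f m)"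
proof (induction m)
  case empty then show ?case by (simp add: rel_mset_Zero)
next
  case (add x m) then show ?case by (simp add: rel_mset_Plus)
qed

lemma rel_mset_trans:
  assumes "rel_mset P m n" "rel_mset P n l" "\<And>x y z. P x y \<Longrightarrow> P y z \<Longrightarrow> P x z"
  shows "rel_mset P m l"
proof -
  have "rel_mset (P OO P) m l" using assms(1,2) by (auto simp: multiset.rel_compp)
  then show ?thesis by (rule multiset.rel_mono_strong) (use assms(3) in blast)
qed

lemma rel_mset_sym:
  assumes "rel_mset P m n" "\<And>x y. P x y \<Longrightarrow> P y x"
  shows "rel_mset P n m"
proof -
  have "rel_mset (conversep P) n m" using assms(1) by (simp add: multiset.rel_flip)
  then show ?thesis by (rule multiset.rel_mono_strong) (use assms(2) in auto)
qed

lemma rel_mset_mono': "rel_mset P m n \<Longrightarrow> (\<And>x y. P x y \<Longrightarrow> Q x y) \<Longrightarrow> rel_mset Q m n"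
  by (erule multiset.rel_mono_strong) blast

lemma rel_mset_refl': "(\<And>x. x \<in># m \<Longrightarrow> P x x) \<Longrightarrow> rel_mset P m m"
  by (rule multiset.rel_refl_strong) auto

lemma fin_reps:
  assumes "finite (A // r)" "\<And>a. a \<in> A \<Longrightarrow> (a, a) \<in> r"
  shows "\<exists>B\<subseteq>A. finite B \<and> (\<forall>a\<in>A. \<exists>b\<in>B. (a, b) \<in> r)"
proof -
  define g where "g C = (SOME b. b \<in> A \<and> C = r `` {b})" for C
  have g: "g (r `` {a}) \<in> A \<and> r `` {a} = r `` {g (r `` {a})}" if "a \<in> A" for a
    unfolding g_def by (rule someI_ex) (use that in blast)
  show ?thesis
  proof (intro exI[of _ "g ` (A // r)"] conjI ballI)
    show "g ` (A // r) \<subseteq> A" using g unfolding quotient_def by auto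
    show "finite (g ` (A // r))" using assms(1) by simp
  next
    fix a assume a: "a \<in> A"
    have "g (r `` {a}) \<in> r `` {a}" using g[OF a] assms(2) by blast
    then have "(a, g (r `` {a})) \<in> r" by simp
    moreover have "r `` {a} \<in> A // r" using a unfolding quotient_def by blast
    ultimately show "\<exists>b\<in>g ` (A // r). (a, b) \<in> r" by blast
  qed
qed

lemma fin_quot:
  assumes "finite B" "\<And>a. a \<in> A \<Longrightarrow> \<exists>b\<in>B. r `` {a} = r `` {b}"
  shows "finite (A // r)"
proof -
  have "A // r \<subseteq> (\<lambda>b. r `` {b}) ` B" unfolding quotient_def using assms(2) by blast
  then show ?thesis using assms(1) finite_subset by blast
qed

lemma assoc_sym:
  assumes "\<And>x y. x \<in> S \<Longrightarrow> y \<in> S \<Longrightarrow> x * y \<in> S"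
  shows "assoc_in S a b \<Longrightarrow> assoc_in S b a"
proof -
  assume "assoc_in S a b"
  then obtain u v where uv: "a \<in> S" "b \<in> S" "u \<in> S" "v \<in> S" "u * v = 1" "a = u * b"
    unfolding assoc_in_def unit_in_def by blast
  have "b = v * a" using uv(5,6) by (metis mult.assoc mult.commute mult_1)
  moreover have "v * u = 1" using uv(5) by (simp add: mult.commute)
  ultimately show "assoc_in S b a" unfolding assoc_in_def unit_in_def using uv by blast
qed

lemma assoc_trans:
  assumes "\<And>x y. x \<in> S \<Longrightarrow> y \<in> S \<Longrightarrow> x * y \<in> S"
  shows "assoc_in S a b \<Longrightarrow> assoc_in S b c \<Longrightarrow> assoc_in S a c"
proof -
  assume "assoc_in S a b" "assoc_in S b c"
  then obtain u v u' v' where "a \<in> S" "c \<in> S" "u \<in> S" "v \<in> S" "u * v = 1" "a = u * b"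
    "u' \<in> S" "v' \<in> S" "u' * v' = 1" "b = u' * c"
    unfolding assoc_in_def unit_in_def by blast
  moreover have "(u * u') * (v * v') = 1"
    using \<open>u * v = 1\<close> \<open>u' * v' = 1\<close> by (metis mult.assoc mult.left_commute mult_1_right)
  moreover have "a = (u * u') * c" using \<open>a = u * b\<close> \<open>b = u' * c\<close> by (simp add: mult.assoc)
  ultimately show "assoc_in S a c" unfolding assoc_in_def unit_in_def using assms by blast
qed

lemma fact_equiv_class:
  assumes "\<And>x y. x \<in> S \<Longrightarrow> y \<in> S \<Longrightarrow> x * y \<in> S" "(m, n) \<in> fact_equiv S"
  shows "fact_equiv S `` {m} = fact_equiv S `` {n}"
proof -
  have sym: "rel_mset (assoc_in S) a b \<Longrightarrow> rel_mset (assoc_in S) b a" for a b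
    by (rule rel_mset_sym) (use assoc_sym[OF assms(1)] in blast)+
  have tr: "rel_mset (assoc_in S) a b \<Longrightarrow> rel_mset (assoc_in S) b c \<Longrightarrow> rel_mset (assoc_in S) a c" for a b c
    by (rule rel_mset_trans) (use assoc_trans[OF assms(1)] in blast)+
  have mn: "rel_mset (assoc_in S) m n" using assms(2) unfolding fact_equiv_def by simp
  show ?thesis
  proof (intro set_eqI iffI)
    fix z assume "z \<in> fact_equiv S `` {m}"
    then have "rel_mset (assoc_in S) m z" unfolding fact_equiv_def by simp
    then have "rel_mset (assoc_in S) n z" using tr[OF sym[OF mn]] by blast
    then show "z \<in> fact_equiv S `` {n}" unfolding fact_equiv_def by simp
  next
    fix z assume "z \<in> fact_equiv S `` {n}"
    then have "rel_mset (assoc_in S) n z" unfolding fact_equiv_def by simp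
    then have "rel_mset (assoc_in S) m z" using tr[OF mn] by blast
    then show "z \<in> fact_equiv S `` {m}" unfolding fact_equiv_def by simp
  qed
qed

lemma assoc_refl: "1 \<in> S \<Longrightarrow> p \<in> S \<Longrightarrow> assoc_in S p p"
  unfolding assoc_in_def unit_in_def by (intro conjI exI[of _ 1]) auto

lemma fact_refl:
  assumes "1 \<in> S" "m \<in> factorizations_in S x"
  shows "(m, m) \<in> fact_equiv S"
  using assms unfolding fact_equiv_def factorizations_in_def irred_in_def
  by (auto intro!: rel_mset_refl' assoc_refl)

lemma assocT_prod_gen:
  "rel_mset P m n \<Longrightarrow> (\<forall>a b. P a b \<longrightarrow> (\<exists>w. unit_in UNIV w \<and> a = w * b))
    \<Longrightarrow> \<exists>u. unit_in UNIV u \<and> prod_mset m = u * prod_mset n"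
proof (induction rule: rel_mset_induct)
  case empty then show ?case by (intro exI[of _ 1]) (auto simp: unit_in_def)
next
  case (add R0 a b M N)
  then obtain u where u: "unit_in UNIV u" "prod_mset M = u * prod_mset N" by blast
  obtain w where w: "unit_in UNIV w" "a = w * b" using add by blast
  have "unit_in UNIV (w * u)" using u w unfolding unit_in_def
    by (metis UNIV_I mult.assoc mult.commute mult.left_neutral)
  then show ?case using u w by (intro exI[of _ "w * u"]) (simp add: algebra_simps)
qed

lemma assocT_prod: "rel_mset (assoc_in UNIV) m n \<Longrightarrow> \<exists>u. unit_in UNIV u \<and> prod_mset m = u * prod_mset n"
  by (erule assocT_prod_gen) (auto simp: assoc_in_def)

locale setting =
  fixes K M k R :: "'a::idom set"
  assumes K: "is_subfield K"
    and M: "is_maximal_ideal M" and Mnz: "M \<noteq> {0}"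
    and TKM: "(UNIV :: 'a set) = {a + b | a b. a \<in> K \<and> b \<in> M}"
    and k: "is_subfield k" and kK: "k \<subseteq> K"
    and R_def: "R = {a + b | a b. a \<in> k \<and> b \<in> M}"
begin

lemma K0: "0 \<in> K" and K1: "1 \<in> K" and Kadd: "x \<in> K \<Longrightarrow> y \<in> K \<Longrightarrow> x + y \<in> K"
  and Kdiff: "x \<in> K \<Longrightarrow> y \<in> K \<Longrightarrow> x - y \<in> K" and Kmult: "x \<in> K \<Longrightarrow> y \<in> K \<Longrightarrow> x * y \<in> K"
  and Kinv: "x \<in> K \<Longrightarrow> x \<noteq> 0 \<Longrightarrow> \<exists>y\<in>K. x * y = 1"
  using K unfolding is_subfield_def is_subring_def by auto

lemma k0: "0 \<in> k" and k1: "1 \<in> k" and kadd: "x \<in> k \<Longrightarrow> y \<in> k \<Longrightarrow> x + y \<in> k"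
  and kdiff: "x \<in> k \<Longrightarrow> y \<in> k \<Longrightarrow> x - y \<in> k" and kmult: "x \<in> k \<Longrightarrow> y \<in> k \<Longrightarrow> x * y \<in> k"
  and kinv: "x \<in> k \<Longrightarrow> x \<noteq> 0 \<Longrightarrow> \<exists>y\<in>k. x * y = 1"
  using k unfolding is_subfield_def is_subring_def by auto

lemma M0: "0 \<in> M" and Madd: "x \<in> M \<Longrightarrow> y \<in> M \<Longrightarrow> x + y \<in> M"
  and Mmult: "x \<in> M \<Longrightarrow> r * x \<in> M" and MUNIV: "M \<noteq> UNIV"
  using M unfolding is_maximal_ideal_def is_ideal_def by auto

lemma Mmult2: "x \<in> M \<Longrightarrow> x * r \<in> M"
  using Mmult[of x r] by (simp add: mult.commute)

lemma Mneg: "x \<in> M \<Longrightarrow> - x \<in> M"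
  using Mmult[of x "-1"] by simp

lemma Mdiff: "x \<in> M \<Longrightarrow> y \<in> M \<Longrightarrow> x - y \<in> M"
  using Madd[OF _ Mneg, of x y] by simp

lemma one_notin_M: "1 \<notin> M"
proof
  assume "1 \<in> M"
  then have "\<forall>r. r \<in> M" using Mmult[of 1] by auto
  then show False using MUNIV by auto
qed

lemma KM: "a \<in> K \<Longrightarrow> a \<in> M \<Longrightarrow> a = 0"
proof (rule ccontr)
  assume "a \<in> K" "a \<in> M" "a \<noteq> 0"
  then obtain b where "a * b = 1" using Kinv by blast
  then show False using Mmult2[OF \<open>a \<in> M\<close>, of b] one_notin_M by simp
qed

lemma decomp: "\<exists>a\<in>K. x - a \<in> M"
proof -
  have "x \<in> {a + b | a b. a \<in> K \<and> b \<in> M}" using TKM by blast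
  then obtain a b where "x = a + b" "a \<in> K" "b \<in> M" by blast
  then show ?thesis by (intro bexI[of _ a]) auto
qed

lemma decomp_uniq:
  assumes "a \<in> K" "x - a \<in> M" "b \<in> K" "x - b \<in> M" shows "a = b"
proof -
  have "(x - a) - (x - b) \<in> M" using Mdiff assms by blast
  moreover have "(x - a) - (x - b) = b - a" by simp
  ultimately have "b - a \<in> M" by simp
  moreover have "b - a \<in> K" using Kdiff assms by blast
  ultimately have "b - a = 0" using KM by blast
  then show ?thesis by simp
qed

definition cst :: "'a \<Rightarrow> 'a" where "cst x = (THE a. a \<in> K \<and> x - a \<in> M)"

lemma cst: "cst x \<in> K" "x - cst x \<in> M"
proof -
  obtain a where "a \<in> K" "x - a \<in> M" using decomp by blast
  then have "cst x = a" unfolding cst_def using decomp_uniq by blast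
  then show "cst x \<in> K" "x - cst x \<in> M" using \<open>a \<in> K\<close> \<open>x - a \<in> M\<close> by auto
qed

lemma cst_eq: "a \<in> K \<Longrightarrow> x - a \<in> M \<Longrightarrow> cst x = a"
  using decomp_uniq cst by blast

lemma cst_K: "a \<in> K \<Longrightarrow> cst a = a"
  by (rule cst_eq) (auto simp: M0)

lemma cst_mult: "cst (x * y) = cst x * cst y"
proof (rule cst_eq)
  show "cst x * cst y \<in> K" using cst Kmult by blast
  have "x * y - cst x * cst y = (x - cst x) * y + cst x * (y - cst y)" by (simp add: algebra_simps)
  moreover have "(x - cst x) * y \<in> M" using cst(2) Mmult2 by blast
  moreover have "cst x * (y - cst y) \<in> M" using cst(2) Mmult by blast
  ultimately show "x * y - cst x * cst y \<in> M" using Madd by simp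
qed

lemma cst_one: "cst 1 = 1" using cst_K K1 by blast

lemma cst_zero_iff: "cst x = 0 \<longleftrightarrow> x \<in> M"
proof
  assume "cst x = 0" then show "x \<in> M" using cst(2)[of x] by simp
next
  assume "x \<in> M" then show "cst x = 0" using cst_eq[of 0 x] K0 by simp
qed

lemma R_iff: "x \<in> R \<longleftrightarrow> cst x \<in> k"
proof
  assume "x \<in> R"
  then obtain a b where "x = a + b" "a \<in> k" "b \<in> M" unfolding R_def by blast
  then have "cst x = a" using cst_eq[of a x] kK by auto
  then show "cst x \<in> k" using \<open>a \<in> k\<close> by simp
next
  assume "cst x \<in> k"
  moreover have "x = cst x + (x - cst x)" by simp
  ultimately show "x \<in> R" unfolding R_def using cst(2)[of x] by blast
qed

lemma M_R: "x \<in> M \<Longrightarrow> x \<in> R" using R_iff cst_zero_iff k0 by metis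
lemma k_R: "x \<in> k \<Longrightarrow> x \<in> R" using R_iff cst_K kK by auto
lemma R_mult: "x \<in> R \<Longrightarrow> y \<in> R \<Longrightarrow> x * y \<in> R" using R_iff cst_mult kmult by auto
lemma KR_k: "x \<in> K \<Longrightarrow> x \<in> R \<Longrightarrow> x \<in> k" using R_iff cst_K by auto

lemma unitT: "unit_in UNIV u \<longleftrightarrow> (\<exists>v. u * v = 1)"
  unfolding unit_in_def by auto

lemma unitT_cst: "unit_in UNIV u \<Longrightarrow> cst u \<noteq> 0"
proof
  assume "unit_in UNIV u" "cst u = 0"
  then obtain v where "u * v = 1" unfolding unitT by blast
  then have "cst u * cst v = 1" using cst_mult cst_one by metis
  then show False using \<open>cst u = 0\<close> by simp
qed

lemma unitR_iff: "unit_in R u \<longleftrightarrow> u \<in> R \<and> unit_in UNIV u"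
proof
  assume "unit_in R u" then show "u \<in> R \<and> unit_in UNIV u" unfolding unit_in_def by auto
next
  assume A: "u \<in> R \<and> unit_in UNIV u"
  then obtain v where v: "u * v = 1" unfolding unitT by blast
  have cu: "cst u \<in> k" "cst u \<noteq> 0" using A R_iff unitT_cst by auto
  then obtain e where e: "e \<in> k" "cst u * e = 1" using kinv by blast
  have "cst u * cst v = 1" using v cst_mult cst_one by metis
  then have "cst u * (cst v - e) = 0" using e by (simp add: algebra_simps)
  then have "cst v = e" using cu by simp
  then have "v \<in> R" using R_iff e by simp
  then show "unit_in R u" unfolding unit_in_def using A v by auto
qed


lemma unitT_mult: "unit_in UNIV a \<Longrightarrow> unit_in UNIV b \<Longrightarrow> unit_in UNIV (a * b)"
  unfolding unitT by (metis mult.assoc mult.commute mult.left_neutral)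

lemma unitT_factor: "unit_in UNIV (a * b) \<Longrightarrow> unit_in UNIV a"
  unfolding unitT by (metis mult.assoc)

lemma unitT_one: "unit_in UNIV 1" unfolding unitT by auto

lemma K_unit: "a \<in> K \<Longrightarrow> a \<noteq> 0 \<Longrightarrow> unit_in UNIV a"
  unfolding unitT using Kinv by blast

lemma K_inv: "a \<in> K \<Longrightarrow> a \<noteq> 0 \<Longrightarrow> \<exists>b\<in>K. a * b = 1 \<and> b \<noteq> 0"
  using Kinv by fastforce

lemma scale:
  assumes "x * y \<in> R"
  shows "\<exists>l l'. l \<in> K \<and> l' \<in> K \<and> l * l' = 1 \<and> l * x \<in> R \<and> l' * y \<in> R"
proof (cases "cst x = 0")
  case False
  then obtain l where l: "l \<in> K" "cst x * l = 1" using Kinv cst(1) by blast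
  have "cst (l * x) = 1" using l cst_mult cst_K by (simp add: mult.commute)
  then have "l * x \<in> R" using R_iff k1 by simp
  moreover have "cst (cst x * y) = cst (x * y)" using cst_mult cst_K cst(1) by metis
  then have "cst x * y \<in> R" using assms R_iff by simp
  ultimately show ?thesis using l cst(1)[of x] by (intro exI[of _ l] exI[of _ "cst x"]) (auto simp: mult.commute)
next
  case x0: True
  show ?thesis
  proof (cases "cst y = 0")
    case False
    then obtain l where l: "l \<in> K" "cst y * l = 1" using Kinv cst(1) by blast
    have "cst (l * y) = 1" using l cst_mult cst_K by (simp add: mult.commute)
    then have "l * y \<in> R" using R_iff k1 by simp
    moreover have "cst (cst y * x) = 0" using x0 cst_mult by simp
    then have "cst y * x \<in> R" using R_iff k0 by simp
    ultimately show ?thesis using l cst(1)[of y] by (intro exI[of _ "cst y"] exI[of _ l]) (auto simp: mult.commute)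
  next
    case True
    then have "x \<in> R" "y \<in> R" using x0 R_iff k0 by auto
    then show ?thesis using K1 by (intro exI[of _ 1] exI[of _ 1]) auto
  qed
qed

lemma irredR_iff: "irred_in R q \<longleftrightarrow> q \<in> R \<and> irred_in UNIV q"
proof
  assume A: "irred_in R q"
  then have qR: "q \<in> R" "q \<noteq> 0" "\<not> unit_in R q" unfolding irred_in_def by auto
  then have nu: "\<not> unit_in UNIV q" using unitR_iff by auto
  have "unit_in UNIV a \<or> unit_in UNIV b" if qab: "q = a * b" for a b
  proof -
    have "a * b \<in> R" using qab qR(1) by simp
    then obtain l l' where l: "l \<in> K" "l' \<in> K" "l * l' = 1" "l * a \<in> R" "l' * b \<in> R"
      using scale[of a b] by blast
    have "q = (l * a) * (l' * b)" using qab l(3) by (simp add: algebra_simps)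
    then have "unit_in R (l * a) \<or> unit_in R (l' * b)" using A l unfolding irred_in_def by blast
    then have "unit_in UNIV (l * a) \<or> unit_in UNIV (l' * b)" using unitR_iff by blast
    moreover have "unit_in UNIV l'" "unit_in UNIV l" using l(3) unfolding unitT by (auto simp: mult.commute)
    ultimately show ?thesis using unitT_mult[of l' "l * a"] unitT_mult[of l "l' * b"] l(3)
      by (auto simp: mult.assoc[symmetric] mult.commute[of l' l])
  qed
  then show "q \<in> R \<and> irred_in UNIV q" using qR nu unfolding irred_in_def by auto
next
  assume A: "q \<in> R \<and> irred_in UNIV q"
  then show "irred_in R q" unfolding irred_in_def using unitR_iff by auto
qed

lemma irredT_unit_mult:
  assumes q: "irred_in UNIV q" and u: "unit_in UNIV u"
  shows "irred_in UNIV (u * q)"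
proof -
  obtain v where v: "u * v = 1" using u unfolding unitT by blast
  have "q \<noteq> 0" "\<not> unit_in UNIV q" using q unfolding irred_in_def by auto
  then have "u * q \<noteq> 0" using v by auto
  moreover have "\<not> unit_in UNIV (u * q)"
  proof
    assume "unit_in UNIV (u * q)"
    then have "unit_in UNIV (q * u)" by (simp add: mult.commute)
    then show False using unitT_factor \<open>\<not> unit_in UNIV q\<close> by blast
  qed
  moreover have "unit_in UNIV a \<or> unit_in UNIV b" if "u * q = a * b" for a b
  proof -
    have "q = (v * a) * b" using that v by (metis mult.assoc mult.commute mult.left_neutral)
    then have "unit_in UNIV (v * a) \<or> unit_in UNIV b" using q unfolding irred_in_def by blast
    moreover have "a = u * (v * a)" using v by (simp add: mult.assoc[symmetric])
    ultimately show ?thesis using unitT_mult[OF u] by metis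
  qed
  ultimately show ?thesis unfolding irred_in_def by auto
qed

lemma assocR_T: "assoc_in R a b \<Longrightarrow> assoc_in UNIV a b"
  unfolding assoc_in_def using unitR_iff by auto

lemma normalize: "\<exists>l\<in>K. l \<noteq> 0 \<and> l * x \<in> R"
proof (cases "cst x = 0")
  case True then show ?thesis using K1 R_iff k0 by (intro bexI[of _ 1]) auto
next
  case False
  then obtain l where l: "l \<in> K" "cst x * l = 1" using Kinv cst(1) by blast
  have "cst (l * x) = 1" using l cst_mult cst_K by (simp add: mult.commute)
  then show ?thesis using R_iff k1 l by (intro bexI[of _ l]) auto
qed


lemma R1: "1 \<in> R" using k_R k1 by blast

lemma prod_R: "(\<And>q. q \<in># m \<Longrightarrow> q \<in> R) \<Longrightarrow> prod_mset m \<in> R"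
  by (induction m) (auto simp: R1 R_mult)

lemma cst_prod: "cst (prod_mset m) = prod_mset (image_mset cst m)"
  by (induction m) (auto simp: cst_one cst_mult)


lemma assocT_trans: "assoc_in UNIV a b \<Longrightarrow> assoc_in UNIV b c \<Longrightarrow> assoc_in UNIV a c"
  by (rule assoc_trans) auto

lemma assocT_K: "l \<in> K \<Longrightarrow> l \<noteq> 0 \<Longrightarrow> assoc_in UNIV p (l * p)"
proof -
  assume "l \<in> K" "l \<noteq> 0"
  then obtain b where "l * b = 1" using Kinv by blast
  then have "p = b * (l * p)" "unit_in UNIV b" unfolding unitT
    by (auto simp: mult.assoc[symmetric] mult.commute[of b])
  then show ?thesis unfolding assoc_in_def by blast
qed

lemma unitR_mk: "unit_in UNIV v \<Longrightarrow> cst v \<in> k \<Longrightarrow> unit_in R v"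
  using unitR_iff R_iff by auto

lemma KC:
  assumes x': "x' = l * x" "l \<in> K" "l \<noteq> 0" "x' \<in> R"
  and m: "m \<in> factorizations_in UNIV x"
  shows "\<exists>m''\<in>factorizations_in R x'. rel_mset (assoc_in UNIV) m m''"
proof -
  have irr: "\<And>q. q \<in># m \<Longrightarrow> irred_in UNIV q" and "assoc_in UNIV x (prod_mset m)"
    using m unfolding factorizations_in_def by auto
  then obtain u where u: "unit_in UNIV u" "x = u * prod_mset m" unfolding assoc_in_def by blast
  define nl where "nl q = (SOME l. l \<in> K \<and> l \<noteq> 0 \<and> l * q \<in> R)" for q
  have nl: "nl q \<in> K \<and> nl q \<noteq> 0 \<and> nl q * q \<in> R" for q
    unfolding nl_def by (rule someI_ex) (use normalize[of q] in blast)
  define m' where "m' = image_mset (\<lambda>q. nl q * q) m"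
  have m'irr: "irred_in R q" if qm: "q \<in># m'" for q
  proof -
    obtain p where p: "p \<in># m" "q = nl p * p" using qm unfolding m'_def by auto
    have "irred_in UNIV q" using irredT_unit_mult[OF irr[OF p(1)] K_unit] nl p(2) by blast
    then show ?thesis using irredR_iff nl p(2) by blast
  qed
  have m'R: "q \<in> R" if "q \<in># m'" for q using m'irr[OF that] unfolding irred_in_def by blast
  have rel1: "rel_mset (assoc_in UNIV) m m'"
    unfolding m'_def by (rule rel_mset_image) (use assocT_K nl in blast)
  obtain w where w: "unit_in UNIV w" "prod_mset m = w * prod_mset m'" using assocT_prod[OF rel1] by blast
  define v where "v = l * u * w"
  have v: "unit_in UNIV v" unfolding v_def using unitT_mult K_unit x'(2,3) u w by metis
  have x'v: "x' = v * prod_mset m'" using x'(1) u(2) w(2) unfolding v_def by (simp add: algebra_simps)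
  have pR: "prod_mset m' \<in> R" using prod_R m'R by blast
  have cx': "cst x' = cst v * cst (prod_mset m')" using x'v cst_mult by simp
  show ?thesis
  proof (cases "cst x' = 0")
    case False
    have "cst (prod_mset m') \<in> k" "cst (prod_mset m') \<noteq> 0" using pR R_iff False cx' by auto
    then obtain e where e: "e \<in> k" "cst (prod_mset m') * e = 1" using kinv by blast
    have "cst v = cst x' * e" using cx' e(2) by (simp add: mult.assoc)
    then have "cst v \<in> k" using kmult e(1) x'(4) R_iff by simp
    then have "unit_in R v" using unitR_mk v by blast
    then have "m' \<in> factorizations_in R x'"
      unfolding factorizations_in_def assoc_in_def using m'irr x'v x'(4) pR by blast
    then show ?thesis using rel1 by blast
  next
    case True
    have "cst v \<noteq> 0" using unitT_cst v by blast
    then have "cst (prod_mset m') = 0" using True cx' by simp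
    then have "0 \<in># image_mset cst m'" using cst_prod by simp
    then obtain q0 where q0: "q0 \<in># m'" "cst q0 = 0" by auto
    define d where "d = cst v"
    have d: "d \<in> K" "d \<noteq> 0" unfolding d_def using cst(1) \<open>cst v \<noteq> 0\<close> by auto
    then obtain d' where d': "d' \<in> K" "d * d' = 1" using Kinv by blast
    define rest where "rest = m' - {#q0#}"
    have m'eq: "m' = add_mset q0 rest" unfolding rest_def using q0(1) by simp
    define m'' where "m'' = add_mset (d * q0) rest"
    have dq0M: "d * q0 \<in> M" using q0(2) cst_zero_iff Mmult by blast
    have "irred_in UNIV (d * q0)" using irredT_unit_mult[OF _ K_unit[OF d]] m'irr[OF q0(1)] irredR_iff by blast
    then have "irred_in R (d * q0)" using irredR_iff M_R dq0M by blast
    then have m''irr: "\<forall>q\<in>#m''. irred_in R q" unfolding m''_def using m'irr m'eq by auto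
    have pm'': "prod_mset m'' = d * prod_mset m'" unfolding m''_def using m'eq by (simp add: algebra_simps)
    have x'2: "x' = (v * d') * prod_mset m''" using x'v pm'' d'(2) by (simp add: algebra_simps)
    have "d' \<noteq> 0" using d'(2) by auto
    then have "unit_in UNIV (v * d')" using unitT_mult[OF v K_unit[OF d'(1)]] by blast
    moreover have "cst (v * d') = 1" using cst_mult cst_K[OF d'(1)] d'(2) unfolding d_def by simp
    ultimately have "unit_in R (v * d')" using unitR_mk k1 by simp
    moreover have "prod_mset m'' \<in> R" using prod_R m''irr unfolding irred_in_def by blast
    ultimately have "m'' \<in> factorizations_in R x'"
      unfolding factorizations_in_def assoc_in_def using m''irr x'2 x'(4) by blast
    moreover have "rel_mset (assoc_in UNIV) m' m''"
      unfolding m'eq m''_def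
      by (rule rel_mset_Plus) (auto intro!: rel_mset_refl' assoc_refl assocT_K d)
    then have "rel_mset (assoc_in UNIV) m m''"
      using rel_mset_trans[OF rel1] assocT_trans by blast
    ultimately show ?thesis by blast
  qed
qed


lemma partA:
  assumes U: "U_FFD R"
  shows "U_FFD (UNIV :: 'a set)"
  unfolding U_FFD_def
proof (intro ballI impI)
  fix x :: 'a assume A: "x \<noteq> 0 \<and> is_atomic_elem UNIV x"
  obtain l where l: "l \<in> K" "l \<noteq> 0" "l * x \<in> R" using normalize by blast
  define x' where "x' = l * x"
  have x'nz: "x' \<noteq> 0" using A l by (simp add: x'_def)
  have x'R: "x' \<in> R" using l(3) x'_def by simp
  have atom: "is_atomic_elem R x'"
  proof -
    from A have "unit_in UNIV x \<or> (\<exists>m. m \<noteq> {#} \<and> (\<forall>p\<in>#m. irred_in UNIV p) \<and> x = prod_mset m)"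
      unfolding is_atomic_elem_def by blast
    then show ?thesis
    proof
      assume "unit_in UNIV x"
      then have "unit_in UNIV x'" using unitT_mult[OF K_unit[OF l(1,2)]] x'_def by blast
      then have "unit_in R x'" using unitR_iff x'R by blast
      then show ?thesis unfolding is_atomic_elem_def by blast
    next
      assume "\<exists>m. m \<noteq> {#} \<and> (\<forall>p\<in>#m. irred_in UNIV p) \<and> x = prod_mset m"
      then obtain m where m: "m \<noteq> {#}" "\<forall>p\<in>#m. irred_in UNIV p" "x = prod_mset m" by blast
      have "m \<in> factorizations_in UNIV x"
        unfolding factorizations_in_def assoc_in_def using m unitT_one by (auto intro!: exI[of _ 1])
      then obtain m'' where m'': "m'' \<in> factorizations_in R x'" "rel_mset (assoc_in UNIV) m m''"
        using KC[OF x'_def l(1,2) x'R] by blast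
      have "m'' \<noteq> {#}"
      proof
        assume "m'' = {#}"
        then have "m = {#}" using m''(2) rel_mset_Zero_iff(2) by blast
        then show False using m(1) by simp
      qed
      then obtain q1 rest where mq: "m'' = add_mset q1 rest" using multi_nonempty_split by blast
      obtain v where v: "unit_in R v" "x' = v * prod_mset m''"
        using m''(1) unfolding factorizations_in_def assoc_in_def by blast
      have irr: "\<forall>p\<in>#m''. irred_in R p" using m''(1) unfolding factorizations_in_def by blast
      have q1: "irred_in R q1" using irr mq by simp
      have "v * q1 \<in> R" using R_mult v(1) q1 unfolding unit_in_def irred_in_def by blast
      moreover have "irred_in UNIV (v * q1)"
        using irredT_unit_mult q1 v(1) unitR_iff irredR_iff by blast
      ultimately have "irred_in R (v * q1)" using irredR_iff by blast
      then have "\<forall>p\<in>#add_mset (v * q1) rest. irred_in R p" using irr mq by auto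
      moreover have "x' = prod_mset (add_mset (v * q1) rest)" using v(2) mq by (simp add: mult.assoc)
      ultimately have "add_mset (v * q1) rest \<noteq> {#} \<and> (\<forall>p\<in>#add_mset (v * q1) rest. irred_in R p)
         \<and> x' = prod_mset (add_mset (v * q1) rest)" by simp
      then have "\<exists>m. m \<noteq> {#} \<and> (\<forall>p\<in>#m. irred_in R p) \<and> x' = prod_mset m" by (rule exI)
      then show ?thesis unfolding is_atomic_elem_def by (rule disjI2)
    qed
  qed
  have "x' \<noteq> 0 \<and> is_atomic_elem R x' \<longrightarrow> finite (factorizations_in R x' // fact_equiv R)"
    using U x'R unfolding U_FFD_def by (rule bspec)
  then have fin: "finite (factorizations_in R x' // fact_equiv R)" using x'nz atom by blast
  have frefl: "\<And>a. a \<in> factorizations_in R x' \<Longrightarrow> (a, a) \<in> fact_equiv R"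
    by (rule fact_refl[OF R1])
  have "\<exists>B\<subseteq>factorizations_in R x'. finite B \<and> (\<forall>a\<in>factorizations_in R x'. \<exists>b\<in>B. (a, b) \<in> fact_equiv R)"
    by (rule fin_reps[OF fin]) (rule frefl)
  then obtain B where B: "B \<subseteq> factorizations_in R x'" "finite B"
    "\<forall>a\<in>factorizations_in R x'. \<exists>b\<in>B. (a, b) \<in> fact_equiv R"
    by blast
  show "finite (factorizations_in UNIV x // fact_equiv UNIV)"
  proof (rule fin_quot[OF B(2)])
    fix m assume m: "m \<in> factorizations_in UNIV x"
    obtain m'' where m'': "m'' \<in> factorizations_in R x'" "rel_mset (assoc_in UNIV) m m''"
      using KC[OF x'_def l(1,2) x'R m] by blast
    obtain b where b: "b \<in> B" "(m'', b) \<in> fact_equiv R" using B(3) m''(1) by blast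
    have "rel_mset (assoc_in R) m'' b" using b(2) unfolding fact_equiv_def by simp
    then have "rel_mset (assoc_in UNIV) m'' b" by (rule rel_mset_mono') (rule assocR_T)
    then have "rel_mset (assoc_in UNIV) m b" using rel_mset_trans[OF m''(2)] assocT_trans by blast
    then have "(m, b) \<in> fact_equiv UNIV" unfolding fact_equiv_def by simp
    then have "fact_equiv UNIV `` {m} = fact_equiv UNIV `` {b}"
      by (intro fact_equiv_class) auto
    then show "\<exists>b\<in>B. fact_equiv UNIV `` {m} = fact_equiv UNIV `` {b}" using b(1) by blast
  qed
qed


lemma R_closed: "x \<in> R \<Longrightarrow> y \<in> R \<Longrightarrow> x * y \<in> R" by (rule R_mult)

lemma coset_mult:
  assumes u: "u \<in> k" "u \<noteq> 0"
  shows "(\<lambda>y. (u * c) * y) ` (k - {0}) = (\<lambda>y. c * y) ` (k - {0})"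
proof -
  obtain u' where u': "u' \<in> k" "u * u' = 1" using kinv u by blast
  have u'nz: "u' \<noteq> 0" using u'(2) by auto
  show ?thesis
  proof (intro set_eqI iffI)
    fix z assume "z \<in> (\<lambda>y. (u * c) * y) ` (k - {0})"
    then obtain y where y: "y \<in> k" "y \<noteq> 0" "z = (u * c) * y" by blast
    then have "z = c * (u * y)" "u * y \<in> k - {0}" using kmult u by (auto simp: algebra_simps)
    then show "z \<in> (\<lambda>y. c * y) ` (k - {0})" by blast
  next
    fix z assume "z \<in> (\<lambda>y. c * y) ` (k - {0})"
    then obtain y where y: "y \<in> k" "y \<noteq> 0" "z = c * y" by blast
    have "z = (u * c) * (u' * y)" using y(3) u'(2) by (simp add: algebra_simps)
    moreover have "u' * y \<in> k - {0}" using kmult u'(1) y u'nz by auto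
    ultimately show "z \<in> (\<lambda>y. (u * c) * y) ` (k - {0})" by blast
  qed
qed

lemma irredR_scaled:
  assumes p: "p \<in> M" "irred_in UNIV p" and c: "c \<in> K" "c \<noteq> 0"
  shows "irred_in R (c * p)"
proof -
  have "irred_in UNIV (c * p)" using irredT_unit_mult[OF p(2) K_unit[OF c]] .
  moreover have "c * p \<in> R" using M_R Mmult p(1) by blast
  ultimately show ?thesis using irredR_iff by blast
qed

lemma partB:
  assumes U: "U_FFD R" and p: "p \<in> M" "irred_in UNIV p"
  shows "finite_unit_quotient K k"
proof -
  define x where "x = p * p"
  have pnz: "p \<noteq> 0" using p unfolding irred_in_def by blast
  have xR: "x \<in> R" unfolding x_def using M_R Mmult p(1) by blast
  have xnz: "x \<noteq> 0" unfolding x_def using pnz by simp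
  have pR: "irred_in R p" using irredR_iff M_R p by blast
  have "{#p, p#} \<noteq> {#} \<and> (\<forall>q\<in>#{#p, p#}. irred_in R q) \<and> x = prod_mset {#p, p#}"
    using pR unfolding x_def by simp
  then have "\<exists>m. m \<noteq> {#} \<and> (\<forall>q\<in>#m. irred_in R q) \<and> x = prod_mset m" by (rule exI)
  then have atom: "is_atomic_elem R x" unfolding is_atomic_elem_def by (rule disjI2)
  have "x \<noteq> 0 \<and> is_atomic_elem R x \<longrightarrow> finite (factorizations_in R x // fact_equiv R)"
    using U xR unfolding U_FFD_def by (rule bspec)
  then have fin: "finite (factorizations_in R x // fact_equiv R)" using xnz atom by blast
  have frefl: "\<And>a. a \<in> factorizations_in R x \<Longrightarrow> (a, a) \<in> fact_equiv R"
    by (rule fact_refl[OF R1])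
  have "\<exists>B\<subseteq>factorizations_in R x. finite B \<and> (\<forall>a\<in>factorizations_in R x. \<exists>b\<in>B. (a, b) \<in> fact_equiv R)"
    by (rule fin_reps[OF fin]) (rule frefl)
  then obtain B where B: "finite B"
    "\<forall>a\<in>factorizations_in R x. \<exists>b\<in>B. (a, b) \<in> fact_equiv R"
    by blast
  define S where "S = (\<Union>b\<in>B. set_mset b)"
  have Sfin: "finite S" unfolding S_def using B(1) by simp
  define c0 where "c0 s = (SOME c. c \<in> K \<and> c \<noteq> 0 \<and> assoc_in R (c * p) s)" for s
  define cos where "cos c = (\<lambda>y. c * y) ` (k - {0})" for c
  have main: "cos c \<in> (\<lambda>s. cos (c0 s)) ` S" if c: "c \<in> K" "c \<noteq> 0" for c
  proof -
    obtain c' where c': "c' \<in> K" "c * c' = 1" using Kinv c by blast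
    have c'nz: "c' \<noteq> 0" using c'(2) by auto
    define mc where "mc = {#c * p, c' * p#}"
    have "\<forall>q\<in>#mc. irred_in R q" unfolding mc_def using irredR_scaled[OF p] c c' c'nz by auto
    moreover have "prod_mset mc = x" unfolding mc_def x_def using c'(2)
      by (simp add: algebra_simps)
    moreover have "unit_in R 1" unfolding unit_in_def using R1 by auto
    ultimately have "mc \<in> factorizations_in R x"
      unfolding factorizations_in_def assoc_in_def using xR by auto
    then obtain b where b: "b \<in> B" "(mc, b) \<in> fact_equiv R" using B(2) by blast
    have rb: "rel_mset (assoc_in R) mc b" using b(2) unfolding fact_equiv_def by simp
    have cm: "c * p \<in># mc" unfolding mc_def by simp
    have "\<exists>s\<in>#b. assoc_in R (c * p) s" by (rule rel_mset_elem[OF rb cm])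
    then obtain s where s: "s \<in># b" "assoc_in R (c * p) s" by blast
    have sS: "s \<in> S" unfolding S_def using s(1) b(1) by blast
    have "\<exists>c. c \<in> K \<and> c \<noteq> 0 \<and> assoc_in R (c * p) s" using s(2) c by (intro exI[of _ c]) simp
    then have "c0 s \<in> K \<and> c0 s \<noteq> 0 \<and> assoc_in R (c0 s * p) s"
      unfolding c0_def by (rule someI_ex)
    then have c0: "c0 s \<in> K" "c0 s \<noteq> 0" "assoc_in R (c0 s * p) s" by auto
    have "assoc_in R s (c0 s * p)" using assoc_sym[OF R_closed c0(3)] .
    then have "assoc_in R (c * p) (c0 s * p)" using assoc_trans[OF R_closed s(2)] by blast
    then obtain u where u: "unit_in R u" "c * p = u * (c0 s * p)" unfolding assoc_in_def by blast
    have "(c - u * c0 s) * p = 0" using u(2) by (simp add: algebra_simps)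
    then have cu: "c = u * c0 s" using pnz by simp
    obtain e where e: "e \<in> K" "c0 s * e = 1" using Kinv c0(1,2) by blast
    have "u = c * e" using cu e(2) by (simp add: mult.assoc)
    then have "u \<in> K" using Kmult c(1) e(1) by simp
    moreover have "u \<in> R" using u(1) unfolding unit_in_def by blast
    ultimately have "u \<in> k" using KR_k by blast
    moreover have "u \<noteq> 0" using cu c(2) by auto
    ultimately have "cos c = cos (c0 s)" unfolding cos_def cu by (rule coset_mult)
    then show ?thesis using sS by blast
  qed
  have "{(\<lambda>y. x * y) ` (k - {0}) | x. x \<in> K - {0}} \<subseteq> (\<lambda>s. cos (c0 s)) ` S"
    using main unfolding cos_def by blast
  then show ?thesis unfolding finite_unit_quotient_def using Sfin finite_subset by blast
qed


lemma Qlemma: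
  assumes P: "finite P" "\<And>p. p \<in> P \<Longrightarrow> irred_in UNIV p"
    and cond: "finite_unit_quotient K k \<or> \<not> (\<exists>p\<in>M. irred_in UNIV p)"
  shows "\<exists>Q. finite Q \<and> (\<forall>q p. irred_in R q \<longrightarrow> p \<in> P \<longrightarrow> assoc_in UNIV q p \<longrightarrow> (\<exists>q'\<in>Q. assoc_in R q q'))"
proof -
  define cos where "cos c = (\<lambda>y. c * y) ` (k - {0})" for c
  define Cos where "Cos = {cos c | c. c \<in> K - {0}}"
  define rep where "rep C = (SOME c. c \<in> K - {0} \<and> C = cos c)" for C
  define CS where "CS = (if finite Cos then rep ` Cos else {})"
  define iota where "iota p = (SOME e. e \<in> K \<and> cst p * e = 1)" for p
  define nrm where "nrm p = (if cst p = 0 then p else iota p * p)" for p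
  define Q where "Q = nrm ` P \<union> (\<lambda>(c, p). c * p) ` (CS \<times> P)"
  have CSfin: "finite CS" unfolding CS_def by simp
  have Qfin: "finite Q" unfolding Q_def using P(1) CSfin by simp
  have rep: "rep C \<in> K - {0} \<and> C = cos (rep C)" if "C \<in> Cos" for C
    unfolding rep_def by (rule someI_ex) (use that Cos_def in blast)
  have qprop: "\<exists>q'\<in>Q. assoc_in R q q'" if q: "irred_in R q" and pP: "p \<in> P" and qp: "assoc_in UNIV q p" for q p
  proof -
    obtain u where u: "unit_in UNIV u" "q = u * p" using qp unfolding assoc_in_def by blast
    have qR: "q \<in> R" using q unfolding irred_in_def by blast
    show ?thesis
    proof (cases "cst p = 0")
      case False
      have "\<exists>e. e \<in> K \<and> cst p * e = 1" using Kinv[OF cst(1) False] by blast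
      then have "iota p \<in> K \<and> cst p * iota p = 1" unfolding iota_def by (rule someI_ex)
      then have e: "iota p \<in> K" "cst p * iota p = 1" by auto
      have np: "nrm p = iota p * p" unfolding nrm_def using False by simp
      have cnp: "cst (nrm p) = 1" unfolding np using cst_mult cst_K[OF e(1)] e(2) by (simp add: mult.commute)
      then have npR: "nrm p \<in> R" using R_iff k1 by simp
      define v where "v = u * cst p"
      have vu: "unit_in UNIV v" unfolding v_def using unitT_mult[OF u(1) K_unit[OF cst(1) False]] .
      have qv: "q = v * nrm p" unfolding v_def np u(2) using e(2) by (simp add: algebra_simps)
      have "cst q = cst v" using qv cst_mult cnp by simp
      then have "cst v \<in> k" using qR R_iff by simp
      then have "unit_in R v" using unitR_mk vu by blast
      then have "assoc_in R q (nrm p)" unfolding assoc_in_def using qR npR qv by blast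
      moreover have "nrm p \<in> Q" unfolding Q_def using pP by blast
      ultimately show ?thesis by blast
    next
      case True
      have pM: "p \<in> M" using True cst_zero_iff by simp
      then have finq: "finite_unit_quotient K k" using cond P(2)[OF pP] by blast
      then have "finite Cos" unfolding finite_unit_quotient_def Cos_def cos_def by simp
      then have CS: "CS = rep ` Cos" unfolding CS_def by simp
      define d where "d = cst u"
      have d: "d \<in> K" "d \<noteq> 0" unfolding d_def using cst(1) unitT_cst[OF u(1)] by auto
      have cd: "cos d \<in> Cos" unfolding Cos_def using d by blast
      define c where "c = rep (cos d)"
      have c: "c \<in> K" "c \<noteq> 0" "cos d = cos c" using rep[OF cd] unfolding c_def by auto
      have cCS: "c \<in> CS" unfolding CS c_def using cd by blast
      have "d \<in> cos d" unfolding cos_def using k1 by (intro image_eqI[of _ _ 1]) auto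
      then have "d \<in> cos c" using c(3) by simp
      then obtain e where e: "e \<in> k" "d = c * e" unfolding cos_def by blast
      obtain c' where c': "c' \<in> K" "c * c' = 1" using Kinv c(1,2) by blast
      have c'nz: "c' \<noteq> 0" using c'(2) by auto
      define w where "w = u * c'"
      have wu: "unit_in UNIV w" unfolding w_def using unitT_mult[OF u(1) K_unit[OF c'(1) c'nz]] .
      have "cst w = e" unfolding w_def using cst_mult cst_K[OF c'(1)] e(2) c'(2) d_def
        by (simp add: algebra_simps)
      then have "unit_in R w" using unitR_mk wu e(1) by simp
      moreover have "q = w * (c * p)" unfolding w_def u(2) using c'(2) by (simp add: algebra_simps)
      moreover have "c * p \<in> R" using M_R Mmult pM by blast
      ultimately have "assoc_in R q (c * p)" unfolding assoc_in_def using qR by blast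
      moreover have "c * p \<in> Q" unfolding Q_def using cCS pP by blast
      ultimately show ?thesis by blast
    qed
  qed
  show ?thesis using Qfin qprop by blast
qed


lemma factR_T:
  assumes "m \<in> factorizations_in R x" shows "m \<in> factorizations_in UNIV x"
proof -
  have a: "\<forall>p\<in>#m. irred_in R p" "assoc_in R x (prod_mset m)"
    using assms unfolding factorizations_in_def by auto
  have "\<forall>p\<in>#m. irred_in UNIV p" using a(1) irredR_iff by simp
  moreover have "assoc_in UNIV x (prod_mset m)" using assocR_T[OF a(2)] .
  ultimately show ?thesis unfolding factorizations_in_def by simp
qed

lemma partC:
  assumes UT: "U_FFD (UNIV :: 'a set)"
    and cond: "finite_unit_quotient K k \<or> \<not> (\<exists>p\<in>M. irred_in UNIV p)"
  shows "U_FFD R"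
  unfolding U_FFD_def
proof (intro ballI impI)
  fix x assume xR: "x \<in> R" and A: "x \<noteq> 0 \<and> is_atomic_elem R x"
  have atomT: "is_atomic_elem UNIV x"
  proof -
    have "unit_in R x \<or> (\<exists>m. m \<noteq> {#} \<and> (\<forall>p\<in>#m. irred_in R p) \<and> x = prod_mset m)"
      using A unfolding is_atomic_elem_def by simp
    then show ?thesis
    proof
      assume "unit_in R x"
      then have "unit_in UNIV x" using unitR_iff by simp
      then show ?thesis unfolding is_atomic_elem_def by (rule disjI1)
    next
      assume "\<exists>m. m \<noteq> {#} \<and> (\<forall>p\<in>#m. irred_in R p) \<and> x = prod_mset m"
      then obtain m where m: "m \<noteq> {#}" "\<forall>p\<in>#m. irred_in R p" "x = prod_mset m" by blast
      have "\<forall>p\<in>#m. irred_in UNIV p" using m(2) irredR_iff by simp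
      then have "\<exists>m. m \<noteq> {#} \<and> (\<forall>p\<in>#m. irred_in UNIV p) \<and> x = prod_mset m"
        using m by (intro exI[of _ m]) simp
      then show ?thesis unfolding is_atomic_elem_def by (rule disjI2)
    qed
  qed
  have "x \<noteq> 0 \<and> is_atomic_elem UNIV x \<longrightarrow> finite (factorizations_in UNIV x // fact_equiv UNIV)"
    using UT unfolding U_FFD_def by (rule bspec) simp
  then have fin: "finite (factorizations_in UNIV x // fact_equiv UNIV)" using A atomT by blast
  have frefl: "\<And>a. a \<in> factorizations_in UNIV x \<Longrightarrow> (a, a) \<in> fact_equiv UNIV"
    by (rule fact_refl) simp_all
  have "\<exists>B\<subseteq>factorizations_in UNIV x. finite B \<and> (\<forall>a\<in>factorizations_in UNIV x. \<exists>b\<in>B. (a, b) \<in> fact_equiv UNIV)"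
    by (rule fin_reps[OF fin]) (rule frefl)
  then obtain B where B: "B \<subseteq> factorizations_in UNIV x" "finite B"
    "\<forall>a\<in>factorizations_in UNIV x. \<exists>b\<in>B. (a, b) \<in> fact_equiv UNIV"
    by blast
  define P where "P = (\<Union>b\<in>B. set_mset b)"
  have Pfin: "finite P" unfolding P_def using B(2) by simp
  have Pirr: "irred_in UNIV p" if "p \<in> P" for p
    using that B(1) unfolding P_def factorizations_in_def by blast
  obtain Q where Q: "finite Q"
    "\<forall>q p. irred_in R q \<longrightarrow> p \<in> P \<longrightarrow> assoc_in UNIV q p \<longrightarrow> (\<exists>q'\<in>Q. assoc_in R q q')"
    using Qlemma[OF Pfin Pirr cond] by blast
  define C where "C = (\<Union>b\<in>B. multisets_of_size Q (size b))"
  have Cfin: "finite C" unfolding C_def using B(2) Q(1) by blast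
  show "finite (factorizations_in R x // fact_equiv R)"
  proof (rule fin_quot[OF Cfin])
    fix m assume m: "m \<in> factorizations_in R x"
    have mT: "m \<in> factorizations_in UNIV x" using factR_T[OF m] .
    obtain b where b: "b \<in> B" "(m, b) \<in> fact_equiv UNIV" using B(3) mT by blast
    have rb: "rel_mset (assoc_in UNIV) m b" using b(2) unfolding fact_equiv_def by simp
    have ex: "\<exists>q'. q' \<in> Q \<and> assoc_in R q q'" if qm: "q \<in># m" for q
    proof -
      have "\<exists>p\<in>#b. assoc_in UNIV q p" by (rule rel_mset_elem[OF rb qm])
      then obtain p where p: "p \<in># b" "assoc_in UNIV q p" by blast
      have pP: "p \<in> P" unfolding P_def using p(1) b(1) by blast
      have "irred_in R q" using m qm unfolding factorizations_in_def by blast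
      then show ?thesis using Q(2) pP p(2) by blast
    qed
    define g where "g q = (SOME q'. q' \<in> Q \<and> assoc_in R q q')" for q
    have g: "g q \<in> Q \<and> assoc_in R q (g q)" if "q \<in># m" for q
      unfolding g_def by (rule someI_ex) (rule ex[OF that])
    define m'' where "m'' = image_mset g m"
    have rel: "rel_mset (assoc_in R) m m''" unfolding m''_def
      by (rule rel_mset_image) (use g in blast)
    have "set_mset m'' \<subseteq> Q" unfolding m''_def using g by auto
    moreover have "size m'' = size b" unfolding m''_def using rel_mset_size[OF rb] by simp
    ultimately have "m'' \<in> C" unfolding C_def multisets_of_size_def using b(1) by blast
    moreover have "(m, m'') \<in> fact_equiv R" unfolding fact_equiv_def using rel by simp
    then have "fact_equiv R `` {m} = fact_equiv R `` {m''}"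
      by (intro fact_equiv_class R_closed)
    ultimately show "\<exists>b\<in>C. fact_equiv R `` {m} = fact_equiv R `` {b}" by blast
  qed
qed

end

theorem mainTheorem5:
  fixes K M k :: "'a::idom set"
  assumes K: "is_subfield K"
    and M: "is_maximal_ideal M" and Mnz: "M \<noteq> {0}"
    and TKM: "(UNIV :: 'a set) = {a + b | a b. a \<in> K \<and> b \<in> M}"
    and k: "is_subfield k" and kK: "k \<subseteq> K"
  defines "R \<equiv> {a + b | a b. a \<in> k \<and> b \<in> M}"
  shows "((\<exists>p\<in>M. irred_in UNIV p) \<longrightarrow>
            (U_FFD R \<longleftrightarrow> U_FFD (UNIV :: 'a set) \<and> finite_unit_quotient K k))
       \<and> ((\<not> (\<exists>p\<in>M. irred_in UNIV p)) \<longrightarrow>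
            (U_FFD R \<longleftrightarrow> U_FFD (UNIV :: 'a set)))"
proof -
  interpret setting K M k R using assms unfolding setting_def R_def by blast
  show ?thesis using partA partB partC by blast
qed

end
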